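(* Let $q$ be a prime power and let $\mathcal{A}$ be an essential free arrangement in $\mathbb{F}_q^3$ with exponents $(1,d_2,d_3)$, where $d_2\leq d_3$. Then $d_2\leq q$.
   Context: A (central) hyperplane arrangement $\mathcal{A}$ in $V=\mathbb{K}^\ell$ is a finite set of codimension-one linear subspaces; it is essential if the intersection of all its hyperplanes is $\{0\}$. Let $S=\mathbb{K}[x_1,\dots,x_\ell]$ be the polynomial ring of $V$, and for each $H\in\mathcal{A}$ fix a nonzero linear form $\alpha_H$ with kernel $H$. $\mathrm{Der}_V=\bigoplus_i S\,\partial/\partial x_i$ is the $S$-module of polynomial vector fields. The module of logarithmic vector fields is $D(\mathcal{A})=\{\delta\in \mathrm{Der}_V : \delta(\alpha_H)\in\alpha_H S \text{ for all } H\in\mathcal{A}\}$. $\mathcal{A}$ is free if $D(\mathcal{A})$ is a free $S$-module; then it has a basis of homogeneous (polynomial-degree) elements, and the multiset of their degrees (the degree of $\sum f_i\partial/\partial x_i$ being the common degree of the homogeneous coefficients $f_i$) is called the exponents of $\mathcal{A}$. *)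

theory Defs
  imports Main "HOL-Library.Poly_Mapping"
begin

datatype var3 = X1 | X2 | X3

text \<open>The polynomial ring S = K[x1,x2,x3]: finitely supported maps from monomials
  (exponent vectors var3 =>0 nat) to coefficients; multiplication is convolution.\<close>
type_synonym 'a poly3 = "(var3 \<Rightarrow>\<^sub>0 nat) \<Rightarrow>\<^sub>0 'a"

definition mdeg :: "(var3 \<Rightarrow>\<^sub>0 nat) \<Rightarrow> nat" where
  "mdeg m = sum (Poly_Mapping.lookup m) (Poly_Mapping.keys m)"

text \<open>p is homogeneous of degree d (the zero polynomial is homogeneous of every degree).\<close>
definition homogeneous :: "'a::zero poly3 \<Rightarrow> nat \<Rightarrow> bool" where
  "homogeneous p d \<longleftrightarrow> (\<forall>m\<in>Poly_Mapping.keys p. mdeg m = d)"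

definition const3 :: "'a::zero \<Rightarrow> 'a poly3" where
  "const3 c = Poly_Mapping.single 0 c"

definition var :: "var3 \<Rightarrow> 'a::{zero,one} poly3" where
  "var i = Poly_Mapping.single (Poly_Mapping.single i 1) 1"

definition linform :: "(var3 \<Rightarrow> 'a::comm_ring_1) \<Rightarrow> 'a poly3" where
  "linform a = const3 (a X1) * var X1 + const3 (a X2) * var X2 + const3 (a X3) * var X3"

text \<open>Polynomial vector fields Der_V = S d/dx1 + S d/dx2 + S d/dx3, represented by
  their coefficient functions; application of a derivation to a linear form.\<close>
type_synonym 'a der3 = "var3 \<Rightarrow> 'a poly3"

definition apply_lin :: "'a::comm_ring_1 der3 \<Rightarrow> (var3 \<Rightarrow> 'a) \<Rightarrow> 'a poly3" where
  "apply_lin \<delta> a = const3 (a X1) * \<delta> X1 + const3 (a X2) * \<delta> X2 + const3 (a X3) * \<delta> X3"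

definition lin_kernel :: "(var3 \<Rightarrow> 'a::comm_ring_1) \<Rightarrow> (var3 \<Rightarrow> 'a) set" where
  "lin_kernel a = {v. a X1 * v X1 + a X2 * v X2 + a X3 * v X3 = 0}"

definition is_hyperplane :: "(var3 \<Rightarrow> 'a::field) set \<Rightarrow> bool" where
  "is_hyperplane H \<longleftrightarrow> (\<exists>a. a \<noteq> (\<lambda>_. 0) \<and> H = lin_kernel a)"

definition is_arrangement :: "(var3 \<Rightarrow> 'a::field) set set \<Rightarrow> bool" where
  "is_arrangement A \<longleftrightarrow> finite A \<and> (\<forall>H\<in>A. is_hyperplane H)"

definition essential :: "(var3 \<Rightarrow> 'a::field) set set \<Rightarrow> bool" where
  "essential A \<longleftrightarrow> \<Inter>A = {(\<lambda>_. 0)}"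

text \<open>The condition delta(alpha_H) in alpha_H S does not
  depend on the choice of defining form alpha_H (they differ by a nonzero scalar);
  we require it for every defining form.\<close>
definition logder :: "(var3 \<Rightarrow> 'a::field) set set \<Rightarrow> 'a der3 set" where
  "logder A = {\<delta>. \<forall>H\<in>A. \<forall>a. a \<noteq> (\<lambda>_. 0) \<and> H = lin_kernel a
       \<longrightarrow> linform a dvd apply_lin \<delta> a}"

definition homog_der :: "'a::zero der3 \<Rightarrow> nat \<Rightarrow> bool" where
  "homog_der \<delta> d \<longleftrightarrow> \<delta> \<noteq> (\<lambda>_. 0) \<and> (\<forall>i. homogeneous (\<delta> i) d)"

definition lincomb :: "('i \<Rightarrow> 'a::comm_ring_1 poly3) \<Rightarrow> ('i \<Rightarrow> 'a der3) \<Rightarrow> 'i set \<Rightarrow> 'a der3" where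
  "lincomb f \<theta> I = (\<lambda>j. \<Sum>i\<in>I. f i * \<theta> i j)"

definition is_S_basis :: "'a::comm_ring_1 der3 set \<Rightarrow> (nat \<Rightarrow> 'a der3) \<Rightarrow> nat \<Rightarrow> bool" where
  "is_S_basis M \<theta> n \<longleftrightarrow>
     (\<forall>i<n. \<theta> i \<in> M) \<and>
     (\<forall>\<delta>\<in>M. \<exists>f. \<delta> = lincomb f \<theta> {..<n}) \<and>
     (\<forall>f. lincomb f \<theta> {..<n} = (\<lambda>_. 0) \<longrightarrow> (\<forall>i<n. f i = 0))"

definition free_with_exponents :: "(var3 \<Rightarrow> 'a::field) set set \<Rightarrow> nat list \<Rightarrow> bool" where
  "free_with_exponents A ds \<longleftrightarrow>
     (\<exists>\<theta>. is_S_basis (logder A) \<theta> (length ds) \<and> (\<forall>i<length ds. homog_der (\<theta> i) (ds ! i)))"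

end

theory Submission
  imports Defs "HOL-Number_Theory.Residues" "HOL-Algebra.Sylow"
begin


lemma field_card_prime_power:
  shows "\<exists>k. card (UNIV :: 'a::{finite,field} set) = CHAR('a) ^ k"
proof -
  define q where "q = card (UNIV :: 'a set)"
  define p where "p = CHAR('a)"
  have fin: "finite (UNIV :: 'a set)" by simp
  have p0: "p > 0" unfolding p_def using finite_imp_CHAR_pos[OF fin] by simp
  have pp: "prime p" unfolding p_def using prime_CHAR_semidom[where ?'a='a] p0 by (simp add: p_def)
  have q0: "q > 0" unfolding q_def by (simp add: finite_UNIV_card_ge_0)
  define G where "G = \<lparr> carrier = (UNIV :: 'a set), monoid.mult = (+), one = (0 :: 'a) \<rparr>"
  have grp: "group G"
  proof (rule groupI)
    fix x assume x: "x \<in> carrier G"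
    show "\<exists>y\<in>carrier G. y \<otimes>\<^bsub>G\<^esub> x = \<one>\<^bsub>G\<^esub>"
      by (intro bexI[of _ "-x"]) (auto simp: G_def)
  qed (auto simp: G_def add_ac)
  have ordG: "order G = q" by (simp add: G_def q_def order_def)
  have powG: "x [^]\<^bsub>G\<lparr>carrier := H\<rparr>\<^esub> (n::nat) = of_nat n * x" for x H n
    by (induction n) (auto simp: G_def algebra_simps)
  have onlyp: "r = p" if r: "prime r" "r dvd q" for r
  proof (rule ccontr)
    assume rp: "r \<noteq> p"
    obtain m where qm: "q = r * m" using r by blast
    obtain H where H: "subgroup H G" "card H = r ^ 1"
      using sylow_thm[of r G 1 m] r grp ordG qm by (auto simp: G_def)
    interpret group G by (rule grp)
    have gH: "group (G\<lparr>carrier := H\<rparr>)" using subgroup_imp_group[OF H(1)] .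
    have cH: "comm_group (G\<lparr>carrier := H\<rparr>)"
      by (rule group.group_comm_groupI[OF gH]) (auto simp: G_def add.commute)
    have nz: "of_nat r \<noteq> (0::'a)"
    proof
      assume "of_nat r = (0::'a)"
      hence "p dvd r" unfolding p_def using of_nat_eq_0_iff_char_dvd by blast
      thus False using r rp pp primes_dvd_imp_eq by metis
    qed
    have "H \<subseteq> {0}"
    proof
      fix x assume xH: "x \<in> H"
      have fH: "finite H" by simp
      have e1: "carrier (G\<lparr>carrier := H\<rparr>) = H" by simp
      have e2: "\<one>\<^bsub>G\<lparr>carrier := H\<rparr>\<^esub> = (0::'a)" by (simp add: G_def)
      have "x [^]\<^bsub>G\<lparr>carrier := H\<rparr>\<^esub> card (carrier (G\<lparr>carrier := H\<rparr>)) = \<one>\<^bsub>G\<lparr>carrier := H\<rparr>\<^esub>"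
        by (rule comm_group.power_order_eq_one[OF cH]) (simp_all only: e1 fH xH)
      hence "x [^]\<^bsub>G\<lparr>carrier := H\<rparr>\<^esub> card H = 0" unfolding e1 e2 .
      hence "of_nat (card H) * x = 0" unfolding powG .
      moreover have "card H = r" using H(2) by simp
      ultimately have "of_nat r * x = 0" by simp
      thus "x \<in> {0}" using nz by simp
    qed
    hence c1: "card H \<le> card {0::'a}" by (intro card_mono) (simp_all only: finite.emptyI finite.insertI)
    have c2: "card {0::'a} = Suc 0" by (rule card_1_singleton_iff[THEN iffD2]) blast
    have "card H = r" using H(2) by simp
    hence "r \<le> 1" using c1 c2 by linarith
    thus False using prime_gt_1_nat[OF r(1)] by linarith
  qed
  obtain y where y: "q = p ^ multiplicity p q * y" "\<not> p dvd y"
    using multiplicity_decompose'[of q p] q0 pp by (metis not_prime_unit neq0_conv)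
  have y1: "y = 1"
  proof (rule ccontr)
    assume "y \<noteq> 1"
    then obtain r where r: "prime r" "r dvd y" using prime_factor_nat by blast
    have "r dvd p ^ multiplicity p q * y" using r(2) by (rule dvd_mult)
    hence "r dvd q" unfolding y(1)[symmetric] .
    hence "r = p" using onlyp r(1) by (simp only:)
    thus False using y(2) r(2) by (simp only:)
  qed
  have "q = p ^ multiplicity p q" using y(1) unfolding y1 mult_1_right .
  thus ?thesis unfolding q_def p_def by (rule exI)
qed



lemma UNIV_var3: "(UNIV :: var3 set) = {X1, X2, X3}"
  using var3.exhaust by auto

lemma finite_var3[simp]: "finite (UNIV :: var3 set)"
  by (simp add: UNIV_var3)

lemma mdeg_UNIV: "mdeg m = (\<Sum>v\<in>UNIV. Poly_Mapping.lookup m v)"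
  unfolding mdeg_def
  by (rule sum.mono_neutral_left) (auto simp: in_keys_iff)

lemma mdeg_add: "mdeg (m1 + m2) = mdeg m1 + mdeg m2"
  unfolding mdeg_UNIV by (simp add: lookup_add sum.distrib)

lemma mdeg_single: "mdeg (Poly_Mapping.single i n) = n"
  unfolding mdeg_def by simp

definition hp :: "nat \<Rightarrow> 'a::zero poly3 \<Rightarrow> 'a poly3" where
  "hp d p = Abs_poly_mapping (\<lambda>m. if mdeg m = d then Poly_Mapping.lookup p m else 0)"

lemma lookup_hp: "Poly_Mapping.lookup (hp d p) m = (if mdeg m = d then Poly_Mapping.lookup p m else 0)"
proof -
  have "finite {m. (if mdeg m = d then Poly_Mapping.lookup p m else 0) \<noteq> 0}"
    by (rule finite_subset[of _ "Poly_Mapping.keys p"]) (auto simp: in_keys_iff)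
  thus ?thesis unfolding hp_def by simp
qed

lemma hp_add: "hp d (p + r) = hp d p + (hp d r :: 'a::monoid_add poly3)"
  by (rule poly_mapping_eqI) (simp add: lookup_hp lookup_add)

lemma hp_zero: "hp d 0 = (0 :: 'a::zero poly3)"
  by (rule poly_mapping_eqI) (simp add: lookup_hp)

lemma hp_sum: "hp d (sum f I) = (\<Sum>i\<in>I. hp d (f i) :: 'a::comm_monoid_add poly3)"
  by (induction I rule: infinite_finite_induct) (auto simp: hp_zero hp_add)

lemma homogeneous_hp_self: "homogeneous (hp k g) k"
  unfolding homogeneous_def by (auto simp: in_keys_iff lookup_hp split: if_splits)

lemma homogeneous_hp: "homogeneous p n \<Longrightarrow> hp d p = (if d = n then p else 0)"
  unfolding homogeneous_def
  by (rule poly_mapping_eqI) (auto simp: lookup_hp in_keys_iff)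

lemma homogeneous_mult:
  fixes p r :: "'a::comm_semiring_0 poly3"
  assumes "homogeneous p a" "homogeneous r b"
  shows "homogeneous (p * r) (a + b)"
  unfolding homogeneous_def
proof
  fix m assume "m \<in> Poly_Mapping.keys (p * r)"
  then obtain m1 m2 where "m = m1 + m2" "m1 \<in> Poly_Mapping.keys p" "m2 \<in> Poly_Mapping.keys r"
    using keys_mult by blast
  thus "mdeg m = a + b" using assms unfolding homogeneous_def by (simp add: mdeg_add)
qed

lemma hp_decomp: "g = (\<Sum>k\<in>mdeg ` Poly_Mapping.keys g. hp k (g :: 'a::comm_monoid_add poly3))"
proof (rule poly_mapping_eqI)
  fix m
  have "(\<Sum>k\<in>mdeg ` Poly_Mapping.keys g. Poly_Mapping.lookup (hp k g) m)
      = (\<Sum>k\<in>mdeg ` Poly_Mapping.keys g. if k = mdeg m then Poly_Mapping.lookup g m else 0)"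
    by (rule sum.cong) (auto simp: lookup_hp)
  also have "\<dots> = Poly_Mapping.lookup g m"
    by (auto simp: sum.delta' in_keys_iff)
  finally show "Poly_Mapping.lookup g m = Poly_Mapping.lookup (\<Sum>k\<in>mdeg ` Poly_Mapping.keys g. hp k g) m"
    by (simp add: lookup_sum)
qed

lemma hp_mult_homogeneous:
  fixes g h :: "'a::comm_semiring_0 poly3"
  assumes h: "homogeneous h e"
  shows "hp d (g * h) = (if e \<le> d then hp (d - e) g * h else 0)"
proof -
  define K where "K = mdeg ` Poly_Mapping.keys g"
  have fK: "finite K" unfolding K_def by simp
  have "g * h = (\<Sum>k\<in>K. hp k g * h)"
    unfolding K_def by (subst hp_decomp) (simp add: sum_distrib_right)
  hence "hp d (g * h) = (\<Sum>k\<in>K. hp d (hp k g * h))" by (simp add: hp_sum)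
  also have "\<dots> = (\<Sum>k\<in>K. if k + e = d then hp k g * h else 0)"
    by (rule sum.cong) (auto simp: homogeneous_hp[OF homogeneous_mult[OF homogeneous_hp_self h]])
  also have "\<dots> = (if e \<le> d then hp (d - e) g * h else 0)"
  proof (cases "e \<le> d")
    case True
    have "(\<Sum>k\<in>K. if k + e = d then hp k g * h else 0) = (\<Sum>k\<in>K. if k = d - e then hp k g * h else 0)"
      by (rule sum.cong) (use True in auto)
    also have "\<dots> = (if d - e \<in> K then hp (d - e) g * h else 0)"
      using fK by (simp add: sum.delta')
    also have "\<dots> = hp (d - e) g * h"
    proof -
      have "d - e \<notin> K \<Longrightarrow> hp (d - e) g = 0"
        by (rule poly_mapping_eqI) (auto simp: lookup_hp K_def, metis imageI in_keys_iff)
      thus ?thesis by auto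
    qed
    finally show ?thesis using True by simp
  next
    case False
    thus ?thesis by (auto intro!: sum.neutral)
  qed
  finally show ?thesis .
qed



lemma field_pow_card:
  fixes x :: "'a :: {finite,field}"
  shows "x ^ card (UNIV :: 'a set) = x"
proof (cases "x = 0")
  case False
  have "x * (\<Prod>y\<in>UNIV-{0}. x * y) = x * x ^ (card (UNIV :: 'a set) - 1) * \<Prod>(UNIV-{0})"
    by (simp add: prod.distrib mult_ac)
  also have "x * x ^ (card (UNIV :: 'a set) - 1) = x ^ Suc (card (UNIV :: 'a set) - 1)"
    by (subst power_Suc) auto
  also have "Suc (card (UNIV :: 'a set) - 1) = card (UNIV :: 'a set)"
    using finite_UNIV_card_ge_0[where ?'a = 'a] by simp
  also have "(\<Prod>y\<in>UNIV-{0}. x * y) = (\<Prod>y\<in>UNIV-{0}. y)"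
    by (rule prod.reindex_bij_witness[of _ "\<lambda>y. y / x" "\<lambda>y. x * y"]) (use False in auto)
  finally show ?thesis
    by simp
qed (use finite_UNIV_card_ge_0[where ?'a = 'a] in auto)

lemma CHAR_poly3: "CHAR('a::comm_ring_1 poly3) = CHAR('a)"
proof (rule CHAR_eqI)
  show "of_nat CHAR('a) = (0 :: 'a poly3)"
    by (metis of_nat_CHAR single_of_nat single_zero)
next
  fix x assume "of_nat x = (0 :: 'a poly3)"
  hence "(Poly_Mapping.single 0 (of_nat x) :: 'a poly3) = 0" by (metis single_of_nat)
  hence "(of_nat x :: 'a) = 0" by (metis lookup_single_eq lookup_zero)
  thus "CHAR('a) dvd x" by (simp add: of_nat_eq_0_iff_char_dvd)
qed

lemma const3_pow: "const3 (a::'a::comm_ring_1) ^ n = const3 (a ^ n)"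
  by (induction n) (simp_all add: const3_def mult_single)

lemma var_pow: "(var i :: 'a::comm_ring_1 poly3) ^ n = Poly_Mapping.single (Poly_Mapping.single i n) 1"
proof (induction n)
  case 0 thus ?case by simp
next
  case (Suc n)
  thus ?case by (simp add: var_def mult_single single_add[symmetric])
qed

lemma homogeneous_single: "mdeg m = n \<Longrightarrow> homogeneous (Poly_Mapping.single m c) n"
  unfolding homogeneous_def by simp

lemma homogeneous_var_pow: "homogeneous ((var i :: 'a::comm_ring_1 poly3) ^ n) n"
  unfolding var_pow by (rule homogeneous_single) (simp add: mdeg_single)

lemma card_field_ge2: "card (UNIV :: 'a::{finite,field} set) \<ge> 2"
proof -
  have "card {0::'a, 1} \<le> card (UNIV :: 'a set)" by (rule card_mono) auto
  thus ?thesis by simp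
qed

lemma frob_poly3:
  fixes a :: "var3 \<Rightarrow> 'a::{finite,field}"
  shows "linform a ^ card (UNIV :: 'a set) = apply_lin (\<lambda>i. var i ^ card (UNIV :: 'a set)) a"
proof -
  define q where "q = card (UNIV :: 'a set)"
  obtain k where k: "q = CHAR('a) ^ k" using field_card_prime_power unfolding q_def by blast
  have fin: "finite (UNIV :: 'a set)" by simp
  have p0: "CHAR('a) > 0" using finite_imp_CHAR_pos[OF fin] by simp
  have pp: "prime CHAR('a)" using prime_CHAR_semidom[where ?'a='a] p0 by simp
  have pp3: "prime CHAR('a poly3)" using pp by (simp add: CHAR_poly3)
  have k3: "q = CHAR('a poly3) ^ k" using k by (simp add: CHAR_poly3)
  have fr: "(x + y) ^ q = x ^ q + y ^ q" for x y :: "'a poly3"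
    by (rule freshmans_dream'[OF pp3 k3])
  have cq: "const3 c ^ q = const3 c" for c :: 'a
    by (simp add: const3_pow q_def field_pow_card)
  show ?thesis
    unfolding linform_def apply_lin_def q_def[symmetric]
    by (simp add: fr power_mult_distrib cq)
qed



lemma sum3: "(\<Sum>j\<in>{..<3::nat}. f j) = f 0 + f 1 + (f 2 :: 'b::comm_monoid_add)"
  by (simp add: numeral_2_eq_2 numeral_3_eq_3 lessThan_Suc add_ac)

theorem mainTheorem4:
  fixes A :: "(var3 \<Rightarrow> 'a::{finite,field}) set set" and d2 d3 :: nat
  assumes "is_arrangement A" and "essential A"
    and "free_with_exponents A [1, d2, d3]" and "d2 \<le> d3"
  shows "d2 \<le> card (UNIV :: 'a set)"
proof (rule ccontr)
  define q where "q = card (UNIV :: 'a set)"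
  assume "\<not> d2 \<le> card (UNIV :: 'a set)"
  hence qd2: "q < d2" unfolding q_def by simp
  have q2: "q \<ge> 2" unfolding q_def by (rule card_field_ge2)
  obtain \<theta> where B: "is_S_basis (logder A) \<theta> 3"
    and h0: "homog_der (\<theta> 0) 1" and h1: "homog_der (\<theta> 1) d2" and h2: "homog_der (\<theta> 2) d3"
  proof -
    from assms(3) obtain \<theta> where T: "is_S_basis (logder A) \<theta> (length [1, d2, d3])"
      "\<forall>i<length [1, d2, d3]. homog_der (\<theta> i) ([1, d2, d3] ! i)"
      unfolding free_with_exponents_def by blast
    have "homog_der (\<theta> 0) 1" using T(2)[rule_format, of 0] by simp
    moreover have "homog_der (\<theta> 1) d2" using T(2)[rule_format, of 1] by simp
    moreover have "homog_der (\<theta> 2) d3" using T(2)[rule_format, of 2] by simp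
    moreover have "is_S_basis (logder A) \<theta> 3" using T(1) by (simp add: numeral_3_eq_3)
    ultimately show ?thesis using that by blast
  qed
  have hom0: "homogeneous (\<theta> 0 i) 1" for i using h0 unfolding homog_der_def by blast
  have hom1: "homogeneous (\<theta> 1 i) d2" for i using h1 unfolding homog_der_def by blast
  have hom2: "homogeneous (\<theta> 2 i) d3" for i using h2 unfolding homog_der_def by blast
  define \<theta>E :: "'a der3" where "\<theta>E = (\<lambda>i. var i)"
  define \<theta>F :: "'a der3" where "\<theta>F = (\<lambda>i. var i ^ q)"
  have E_in: "\<theta>E \<in> logder A"
    unfolding logder_def
  proof (intro CollectI ballI allI impI)
    fix H a show "linform a dvd apply_lin \<theta>E a"
      unfolding \<theta>E_def apply_lin_def linform_def by simp
  qed
  have F_in: "\<theta>F \<in> logder A"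
    unfolding logder_def
  proof (intro CollectI ballI allI impI)
    fix H a
    have "apply_lin \<theta>F a = linform a ^ q"
      unfolding \<theta>F_def q_def by (rule frob_poly3[symmetric])
    moreover have "linform a dvd linform a ^ q" using q2 by (intro dvd_power) auto
    ultimately show "linform a dvd apply_lin \<theta>F a" by simp
  qed
  obtain f where f: "\<theta>E = lincomb f \<theta> {..<3}" using B E_in unfolding is_S_basis_def by blast
  obtain g where g: "\<theta>F = lincomb g \<theta> {..<3}" using B F_in unfolding is_S_basis_def by blast
  define F where "F = hp 0 (f 0)"
  define G where "G = hp (q - 1) (g 0)"
  have EF: "var i = F * \<theta> 0 i" for i
  proof -
    have "hp 1 (var i ^ 1 :: 'a poly3) = var i ^ 1"
      unfolding homogeneous_hp[OF homogeneous_var_pow[of i 1]] by (rule if_P) (rule refl)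
    hence "var i = hp 1 (var i :: 'a poly3)" by simp
    also have "\<dots> = hp 1 (\<theta>E i)" unfolding \<theta>E_def by simp
    also have "\<dots> = hp 1 (f 0 * \<theta> 0 i) + hp 1 (f 1 * \<theta> 1 i) + hp 1 (f 2 * \<theta> 2 i)"
      unfolding f lincomb_def sum3 by (simp add: hp_add)
    also have "\<dots> = F * \<theta> 0 i"
    proof -
      have a: "hp 1 (f 0 * \<theta> 0 i) = F * \<theta> 0 i"
        unfolding F_def hp_mult_homogeneous[OF hom0] by simp
      have b: "hp 1 (f 1 * \<theta> 1 i) = 0"
        unfolding hp_mult_homogeneous[OF hom1] using qd2 q2 by simp
      have c: "hp 1 (f 2 * \<theta> 2 i) = 0"
        unfolding hp_mult_homogeneous[OF hom2] using qd2 q2 assms(4) by simp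
      show ?thesis unfolding a b c by simp
    qed
    finally show ?thesis .
  qed
  have FF: "var i ^ q = G * \<theta> 0 i" for i
  proof -
    have "hp q (var i ^ q :: 'a poly3) = var i ^ q"
      unfolding homogeneous_hp[OF homogeneous_var_pow[of i q]] by (rule if_P) (rule refl)
    hence "var i ^ q = hp q (var i ^ q :: 'a poly3)" by simp
    also have "\<dots> = hp q (\<theta>F i)" unfolding \<theta>F_def by simp
    also have "\<dots> = hp q (g 0 * \<theta> 0 i) + hp q (g 1 * \<theta> 1 i) + hp q (g 2 * \<theta> 2 i)"
      unfolding g lincomb_def sum3 by (simp add: hp_add)
    also have "\<dots> = G * \<theta> 0 i"
    proof -
      have a: "hp q (g 0 * \<theta> 0 i) = G * \<theta> 0 i"
        unfolding G_def hp_mult_homogeneous[OF hom0] using q2 by simp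
      have b: "hp q (g 1 * \<theta> 1 i) = 0"
        unfolding hp_mult_homogeneous[OF hom1] using qd2 q2 by simp
      have c: "hp q (g 2 * \<theta> 2 i) = 0"
        unfolding hp_mult_homogeneous[OF hom2] using qd2 q2 assms(4) by simp
      show ?thesis unfolding a b c by simp
    qed
    finally show ?thesis .
  qed
  have l: "var X1 * var X2 ^ q = F * \<theta> 0 X1 * (G * \<theta> 0 X2)"
    unfolding EF[of X1] FF[of X2] ..
  have r: "var X2 * var X1 ^ q = F * \<theta> 0 X2 * (G * \<theta> 0 X1)"
    unfolding EF[of X2] FF[of X1] ..
  have "var X1 * var X2 ^ q = (var X2 * var X1 ^ q :: 'a poly3)"
    unfolding l r by (simp add: mult_ac)
  hence "Poly_Mapping.single (Poly_Mapping.single X1 1 + Poly_Mapping.single X2 q) (1::'a)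
       = Poly_Mapping.single (Poly_Mapping.single X2 1 + Poly_Mapping.single X1 q) 1"
    using var_pow[of X1 1, where 'a='a] var_pow[of X2 1, where 'a='a]
    by (simp add: var_pow mult_single)
  hence "Poly_Mapping.single X1 1 + Poly_Mapping.single X2 q
       = Poly_Mapping.single X2 1 + (Poly_Mapping.single X1 q :: var3 \<Rightarrow>\<^sub>0 nat)"
    by (metis lookup_single_eq lookup_single_not_eq one_neq_zero)
  hence "Poly_Mapping.lookup (Poly_Mapping.single X1 1 + Poly_Mapping.single X2 q) X1
       = Poly_Mapping.lookup (Poly_Mapping.single X2 1 + (Poly_Mapping.single X1 q :: var3 \<Rightarrow>\<^sub>0 nat)) X1"
    by simp
  hence "1 = q" by (simp add: lookup_add lookup_single)
  thus False using q2 by simp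
qed

end
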